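(* Assume Assumption 1, Assumption 2 and the null hypothesis $H_0:\ T_i(1)=T_i(0)$ for all $i$, and condition on $\boldsymbol{T}(1),\boldsymbol{T}(0)$. Then for every unit $i$ and time $t$, $$\mathbb{E}\{Z_i\mathbb{1}(W_i\ge t)\mid\boldsymbol{T}(1),\boldsymbol{T}(0),\mathbb{1}(W_i\ge t),\Delta_i\mathbb{1}(W_i=t)\}=\mathbb{E}\{Z_i\mathbb{1}(W_i\ge t)\mid\boldsymbol{T}(1),\boldsymbol{T}(0),\mathbb{1}(W_i\ge t)\}=\mathbb{1}(W_i\ge t)\,\phi(t).$$
   Context: There are $n$ units. Unit $i$ has potential event times $T_i(1),T_i(0)\ge 0$, potential censoring times $C_i(1),C_i(0)\in[0,\infty]$, and treatment indicator $Z_i\in\{0,1\}$; bold letters denote $n$-vectors. Assumption 1: conditional on $\boldsymbol{T}(1),\boldsymbol{T}(0),\boldsymbol{C}(1),\boldsymbol{C}(0)$, the $Z_i$ are i.i.d. Bernoulli$(p_1)$, $p_1=1-p_0\in(0,1)$. Assumption 2: $(\boldsymbol{C}(1),\boldsymbol{C}(0))$ is independent of $(\boldsymbol{T}(1),\boldsymbol{T}(0))$ and the pairs $(C_i(1),C_i(0))$ are i.i.d. across $i$. $G_z(c)=\Pr(C_i(z)\ge c)$, $\phi(t)=p_1G_1(t)/\{p_1G_1(t)+p_0G_0(t)\}$. Realized: $T_i=Z_iT_i(1)+(1-Z_i)T_i(0)$, $C_i=Z_iC_i(1)+(1-Z_i)C_i(0)$, $W_i=\min\{T_i,C_i\}$,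 $\Delta_i=\mathbb{1}(T_i\le C_i)$. *)

theory Defs
  imports "HOL-Probability.Probability"
begin

definition realT :: "bool \<Rightarrow> real \<Rightarrow> real \<Rightarrow> real" where
  "realT z t1 t0 = (if z then t1 else t0)"

definition realC :: "bool \<Rightarrow> ereal \<Rightarrow> ereal \<Rightarrow> ereal" where
  "realC z c1 c0 = (if z then c1 else c0)"

definition obsW :: "bool \<Rightarrow> real \<Rightarrow> real \<Rightarrow> ereal \<Rightarrow> ereal \<Rightarrow> ereal" where
  "obsW z t1 t0 c1 c0 = min (ereal (realT z t1 t0)) (realC z c1 c0)"

definition obsDelta :: "bool \<Rightarrow> real \<Rightarrow> real \<Rightarrow> ereal \<Rightarrow> ereal \<Rightarrow> bool" where
  "obsDelta z t1 t0 c1 c0 = (ereal (realT z t1 t0) \<le> realC z c1 c0)"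

(* phi(t) = p1 G1(t) / (p1 G1(t) + p0 G0(t)), with p0 = 1 - p1
   (Isabelle convention x / 0 = 0 when the denominator vanishes) *)
definition phi :: "real \<Rightarrow> (real \<Rightarrow> real) \<Rightarrow> (real \<Rightarrow> real) \<Rightarrow> real \<Rightarrow> real" where
  "phi p1 G1 G0 t = p1 * G1 t / (p1 * G1 t + (1 - p1) * G0 t)"

end

theory Submission
  imports Defs
begin

theorem lemmaA1:
  fixes M :: "'a measure" and n :: nat and p1 :: real
    and T1 T0 :: "nat \<Rightarrow> real"
    and Z :: "nat \<Rightarrow> 'a \<Rightarrow> bool"
    and C1 C0 :: "nat \<Rightarrow> 'a \<Rightarrow> ereal"
    and G1 G0 :: "real \<Rightarrow> real"
    and i :: nat and t :: real
  assumes prob: "prob_space M"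
    and p1: "0 < p1" "p1 < 1"
    and T_nonneg: "\<And>j. j < n \<Longrightarrow> 0 \<le> T1 j \<and> 0 \<le> T0 j"
    and C_nonneg: "\<And>j \<omega>. j < n \<Longrightarrow> \<omega> \<in> space M \<Longrightarrow> 0 \<le> C1 j \<omega> \<and> 0 \<le> C0 j \<omega>"
    \<comment> \<open>Assumption 1 (together with the independence part of Assumption 2):
        the Z_i are independent Bernoulli(p1), independent of the censoring times\<close>
    and Z_indep: "prob_space.indep_vars M (\<lambda>_. count_space UNIV) Z {..<n}"
    and Z_bern: "\<And>j. j < n \<Longrightarrow> prob_space.prob M {\<omega> \<in> space M. Z j \<omega>} = p1"
    and ZC_indep: "prob_space.indep_set M
        (sigma_sets (space M) {(\<lambda>\<omega>. \<lambda>j\<in>{..<n}. Z j \<omega>) -` A \<inter> space M | A.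
            A \<in> sets (Pi\<^sub>M {..<n} (\<lambda>_. count_space UNIV))})
        (sigma_sets (space M) {(\<lambda>\<omega>. \<lambda>j\<in>{..<n}. (C1 j \<omega>, C0 j \<omega>)) -` A \<inter> space M | A.
            A \<in> sets (Pi\<^sub>M {..<n} (\<lambda>_. borel))})"
    \<comment> \<open>Assumption 2: the pairs (C_i(1), C_i(0)) are i.i.d. across units\<close>
    and C_indep: "prob_space.indep_vars M (\<lambda>_. borel) (\<lambda>j \<omega>. (C1 j \<omega>, C0 j \<omega>)) {..<n}"
    and C_ident: "\<And>j k. j < n \<Longrightarrow> k < n \<Longrightarrow>
        distr M borel (\<lambda>\<omega>. (C1 j \<omega>, C0 j \<omega>)) = distr M borel (\<lambda>\<omega>. (C1 k \<omega>, C0 k \<omega>))"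
    and G1_def: "\<And>j c. j < n \<Longrightarrow> G1 c = prob_space.prob M {\<omega> \<in> space M. C1 j \<omega> \<ge> ereal c}"
    and G0_def: "\<And>j c. j < n \<Longrightarrow> G0 c = prob_space.prob M {\<omega> \<in> space M. C0 j \<omega> \<ge> ereal c}"
    \<comment> \<open>null hypothesis H0\<close>
    and H0: "\<And>j. j < n \<Longrightarrow> T1 j = T0 j"
    and i: "i < n"
  defines "W \<equiv> \<lambda>\<omega>. obsW (Z i \<omega>) (T1 i) (T0 i) (C1 i \<omega>) (C0 i \<omega>)"
    and "D \<equiv> \<lambda>\<omega>. obsDelta (Z i \<omega>) (T1 i) (T0 i) (C1 i \<omega>) (C0 i \<omega>)"
  shows "AE \<omega> in M.
      real_cond_exp M
        (vimage_algebra (space M) (\<lambda>\<omega>. (W \<omega> \<ge> ereal t, D \<omega> \<and> W \<omega> = ereal t)) (count_space UNIV))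
        (\<lambda>\<omega>. of_bool (Z i \<omega>) * of_bool (W \<omega> \<ge> ereal t)) \<omega>
    = real_cond_exp M
        (vimage_algebra (space M) (\<lambda>\<omega>. W \<omega> \<ge> ereal t) (count_space UNIV))
        (\<lambda>\<omega>. of_bool (Z i \<omega>) * of_bool (W \<omega> \<ge> ereal t)) \<omega>
    \<and> real_cond_exp M
        (vimage_algebra (space M) (\<lambda>\<omega>. W \<omega> \<ge> ereal t) (count_space UNIV))
        (\<lambda>\<omega>. of_bool (Z i \<omega>) * of_bool (W \<omega> \<ge> ereal t)) \<omega>
      = of_bool (W \<omega> \<ge> ereal t) * phi p1 G1 G0 t"
proof -
  interpret prob_space M by (rule prob)
  define \<tau> where "\<tau> = T1 i"
  define P where "P = (\<lambda>\<omega>. W \<omega> \<ge> ereal t)"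
  define F where "F = vimage_algebra (space M) P (count_space UNIV)"
  define E1 where "E1 = {\<omega> \<in> space M. Z i \<omega>}"
  define F1 where "F1 = {\<omega> \<in> space M. ereal t \<le> C1 i \<omega>}"
  define F0 where "F0 = {\<omega> \<in> space M. ereal t \<le> C0 i \<omega>}"
  define S where "S = {\<omega> \<in> space M. P \<omega>}"
  have W_eq: "W \<omega> = min (ereal \<tau>) (if Z i \<omega> then C1 i \<omega> else C0 i \<omega>)" for \<omega>
    unfolding W_def obsW_def realT_def realC_def \<tau>_def using H0[OF i] by simp
  have D_eq: "D \<omega> = (ereal \<tau> \<le> (if Z i \<omega> then C1 i \<omega> else C0 i \<omega>))" for \<omega>
    unfolding D_def obsDelta_def realT_def realC_def \<tau>_def using H0[OF i] by simp
  have Q_eq: "(D \<omega> \<and> W \<omega> = ereal t) = (\<tau> = t \<and> P \<omega>)" for \<omega>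
    unfolding P_def W_eq D_eq by (auto simp: min_def split: if_splits)
  \<comment> \<open>first equality: the two sigma algebras coincide\<close>
  define g :: "bool \<Rightarrow> bool \<times> bool" where "g = (\<lambda>b. (b, \<tau> = t \<and> b))"
  have setsg: "sets (vimage_algebra UNIV g (count_space UNIV)) = sets (count_space UNIV)"
  proof -
    have "sets (vimage_algebra UNIV g (count_space UNIV)) = {g -` A \<inter> UNIV | A. A \<in> sets (count_space UNIV)}"
      by (rule sets_vimage_algebra2) auto
    also have "\<dots> = UNIV"
    proof (auto)
      fix B :: "bool set"
      have "B = g -` (g ` B)" unfolding g_def by auto
      then show "\<exists>A. B = g -` A" by blast
    qed
    finally show ?thesis by simp
  qed
  have Feq: "vimage_algebra (space M) (\<lambda>\<omega>. (W \<omega> \<ge> ereal t, D \<omega> \<and> W \<omega> = ereal t)) (count_space UNIV) = F"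
  proof -
    have "vimage_algebra (space M) (\<lambda>\<omega>. (W \<omega> \<ge> ereal t, D \<omega> \<and> W \<omega> = ereal t)) (count_space UNIV)
        = vimage_algebra (space M) (\<lambda>\<omega>. g (P \<omega>)) (count_space UNIV)"
      by (rule vimage_algebra_cong) (auto simp: g_def Q_eq P_def)
    also have "\<dots> = vimage_algebra (space M) P (vimage_algebra UNIV g (count_space UNIV))"
      by (rule vimage_algebra_vimage_algebra_eq[symmetric]) auto
    also have "\<dots> = F" unfolding F_def
      by (rule vimage_algebra_cong) (auto simp: setsg)
    finally show ?thesis .
  qed
  let ?ZA = "sigma_sets (space M) {(\<lambda>\<omega>. \<lambda>j\<in>{..<n}. Z j \<omega>) -` A \<inter> space M | A.
            A \<in> sets (Pi\<^sub>M {..<n} (\<lambda>_. count_space UNIV))}"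
  let ?CA = "sigma_sets (space M) {(\<lambda>\<omega>. \<lambda>j\<in>{..<n}. (C1 j \<omega>, C0 j \<omega>)) -` A \<inter> space M | A.
            A \<in> sets (Pi\<^sub>M {..<n} (\<lambda>_. borel))}"
  have E1Z: "E1 \<in> ?ZA"
  proof -
    let ?A = "(\<lambda>x. x i) -` {True} \<inter> space (Pi\<^sub>M {..<n} (\<lambda>_. count_space (UNIV::bool set)))"
    have "?A \<in> sets (Pi\<^sub>M {..<n} (\<lambda>_. count_space UNIV))"
      using measurable_sets[OF measurable_component_singleton[of i "{..<n}" "\<lambda>_. count_space (UNIV::bool set)"], of "{True}"] i
      by auto
    moreover have "E1 = (\<lambda>\<omega>. \<lambda>j\<in>{..<n}. Z j \<omega>) -` ?A \<inter> space M"
    proof -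
      have mem: "(\<lambda>j\<in>{..<n}. Z j \<omega>) \<in> space (Pi\<^sub>M {..<n} (\<lambda>_. count_space (UNIV::bool set)))" for \<omega>
        by (simp add: space_PiM)
      show ?thesis unfolding E1_def using i mem by (intro set_eqI) auto
    qed
    ultimately show ?thesis by blast
  qed
  have E1cZ: "space M - E1 \<in> ?ZA" using E1Z by (rule sigma_sets.Compl)
  have F1C: "F1 \<in> ?CA"
  proof -
    let ?A = "{x \<in> space (Pi\<^sub>M {..<n} (\<lambda>_. borel :: (ereal \<times> ereal) measure)). ereal t \<le> fst (x i)}"
    have m1: "(\<lambda>x. x i) \<in> measurable (Pi\<^sub>M {..<n} (\<lambda>_. borel :: (ereal \<times> ereal) measure)) borel"
      using measurable_component_singleton[of i "{..<n}" "\<lambda>_. borel :: (ereal \<times> ereal) measure"] i by simp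
    have m2: "(fst :: ereal \<times> ereal \<Rightarrow> ereal) \<in> borel_measurable borel"
      by (intro borel_measurable_continuous_onI continuous_intros)
    have m: "(\<lambda>x. fst (x i)) \<in> borel_measurable (Pi\<^sub>M {..<n} (\<lambda>_. borel :: (ereal \<times> ereal) measure))"
      using measurable_compose[OF m1 m2] by (simp add: o_def)
    have cl: "{y::ereal. ereal t \<le> y} \<in> sets borel"
      by (rule borel_closed) (simp add: closed_Collect_le)
    have "?A = (\<lambda>x. fst (x i)) -` {y::ereal. ereal t \<le> y} \<inter> space (Pi\<^sub>M {..<n} (\<lambda>_. borel :: (ereal \<times> ereal) measure))"
      by auto
    then have "?A \<in> sets (Pi\<^sub>M {..<n} (\<lambda>_. borel))"
      using measurable_sets[OF m cl] by simp
    moreover have "F1 = (\<lambda>\<omega>. \<lambda>j\<in>{..<n}. (C1 j \<omega>, C0 j \<omega>)) -` ?A \<inter> space M"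
    proof -
      have mem: "(\<lambda>j\<in>{..<n}. (C1 j \<omega>, C0 j \<omega>)) \<in> space (Pi\<^sub>M {..<n} (\<lambda>_. borel :: (ereal \<times> ereal) measure))" for \<omega>
        by (simp add: space_PiM)
      show ?thesis unfolding F1_def using i mem by (intro set_eqI) auto
    qed
    ultimately show ?thesis by blast
  qed
  have F0C: "F0 \<in> ?CA"
  proof -
    let ?A = "{x \<in> space (Pi\<^sub>M {..<n} (\<lambda>_. borel :: (ereal \<times> ereal) measure)). ereal t \<le> snd (x i)}"
    have m1: "(\<lambda>x. x i) \<in> measurable (Pi\<^sub>M {..<n} (\<lambda>_. borel :: (ereal \<times> ereal) measure)) borel"
      using measurable_component_singleton[of i "{..<n}" "\<lambda>_. borel :: (ereal \<times> ereal) measure"] i by simp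
    have m2: "(snd :: ereal \<times> ereal \<Rightarrow> ereal) \<in> borel_measurable borel"
      by (intro borel_measurable_continuous_onI continuous_intros)
    have m: "(\<lambda>x. snd (x i)) \<in> borel_measurable (Pi\<^sub>M {..<n} (\<lambda>_. borel :: (ereal \<times> ereal) measure))"
      using measurable_compose[OF m1 m2] by (simp add: o_def)
    have cl: "{y::ereal. ereal t \<le> y} \<in> sets borel"
      by (rule borel_closed) (simp add: closed_Collect_le)
    have "?A = (\<lambda>x. snd (x i)) -` {y::ereal. ereal t \<le> y} \<inter> space (Pi\<^sub>M {..<n} (\<lambda>_. borel :: (ereal \<times> ereal) measure))"
      by auto
    then have "?A \<in> sets (Pi\<^sub>M {..<n} (\<lambda>_. borel))"
      using measurable_sets[OF m cl] by simp
    moreover have "F0 = (\<lambda>\<omega>. \<lambda>j\<in>{..<n}. (C1 j \<omega>, C0 j \<omega>)) -` ?A \<inter> space M"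
    proof -
      have mem: "(\<lambda>j\<in>{..<n}. (C1 j \<omega>, C0 j \<omega>)) \<in> space (Pi\<^sub>M {..<n} (\<lambda>_. borel :: (ereal \<times> ereal) measure))" for \<omega>
        by (simp add: space_PiM)
      show ?thesis unfolding F0_def using i mem by (intro set_eqI) auto
    qed
    ultimately show ?thesis by blast
  qed
  have ev: "E1 \<in> events" "F1 \<in> events" "F0 \<in> events"
    using indep_setD_ev1[OF ZC_indep] indep_setD_ev2[OF ZC_indep] E1Z F1C F0C by auto
  have pE1: "prob E1 = p1" using Z_bern[OF i] by (simp add: E1_def)
  have pF1: "prob F1 = G1 t" using G1_def[OF i] by (simp add: F1_def)
  have pF0: "prob F0 = G0 t" using G0_def[OF i] by (simp add: F0_def)
  have p11: "prob (E1 \<inter> F1) = p1 * G1 t"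
    using indep_setD[OF ZC_indep E1Z F1C] pE1 pF1 by simp
  have p00: "prob ((space M - E1) \<inter> F0) = (1 - p1) * G0 t"
    using indep_setD[OF ZC_indep E1cZ F0C] pE1 pF0 prob_compl[OF ev(1)] by simp
  have S_eq: "S = (if t \<le> \<tau> then (E1 \<inter> F1) \<union> ((space M - E1) \<inter> F0) else {})"
    unfolding S_def P_def W_eq E1_def F1_def F0_def by auto
  have evS: "S \<in> events" using ev unfolding S_eq by auto
  have ES_eq: "E1 \<inter> S = (if t \<le> \<tau> then E1 \<inter> F1 else {})"
    unfolding S_eq by auto
  have evES: "E1 \<inter> S \<in> events" using ev unfolding ES_eq by auto
  define c where "c = phi p1 G1 G0 t"
  have key: "prob (E1 \<inter> S) = c * prob S"
  proof (cases "t \<le> \<tau>")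
    case True
    have "prob S = prob (E1 \<inter> F1) + prob ((space M - E1) \<inter> F0)"
    proof -
      have "S = E1 \<inter> F1 \<union> (space M - E1) \<inter> F0" using S_eq True by simp
      then show ?thesis using ev by (simp only:) (rule finite_measure_Union, auto)
    qed
    also have "\<dots> = p1 * G1 t + (1 - p1) * G0 t" using p11 p00 by simp
    finally have pS: "prob S = p1 * G1 t + (1 - p1) * G0 t" .
    have G1nn: "G1 t \<ge> 0" and G0nn: "G0 t \<ge> 0" using pF1 pF0 measure_nonneg by metis+
    have a: "p1 * G1 t \<ge> 0" "(1 - p1) * G0 t \<ge> 0" using p1 G1nn G0nn by auto
    show ?thesis
    proof (cases "p1 * G1 t + (1 - p1) * G0 t = 0")
      case True
      then have "p1 * G1 t = 0" using a by linarith
      then show ?thesis using True p11 ES_eq \<open>t \<le> \<tau>\<close> pS by (simp add: c_def phi_def)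
    next
      case False
      then show ?thesis using p11 ES_eq \<open>t \<le> \<tau>\<close> pS by (simp add: c_def phi_def)
    qed
  next
    case False
    then show ?thesis using ES_eq S_eq by simp
  qed
  define f where "f = (\<lambda>\<omega>. of_bool (Z i \<omega>) * of_bool (W \<omega> \<ge> ereal t) :: real)"
  define h where "h = (\<lambda>\<omega>. of_bool (W \<omega> \<ge> ereal t) * c)"
  have f_ind: "f \<omega> = indicator (E1 \<inter> S) \<omega>" if "\<omega> \<in> space M" for \<omega>
    using that by (auto simp: f_def E1_def S_def P_def indicator_def)
  have h_ind: "h \<omega> = c * indicator S \<omega>" if "\<omega> \<in> space M" for \<omega>
    using that by (auto simp: h_def S_def P_def indicator_def)
  have subalg: "subalgebra M F"
    unfolding subalgebra_def F_def
  proof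
    show "sets (vimage_algebra (space M) P (count_space UNIV)) \<subseteq> sets M"
    proof (rule sets_image_in_sets)
      show "P \<in> measurable M (count_space UNIV)"
        unfolding measurable_count_space_eq2_countable
      proof (auto)
        fix b :: bool
        have "P -` {b} \<inter> space M = (if b then S else space M - S)"
          by (auto simp: S_def)
        then show "P -` {b} \<inter> space M \<in> events" using evS by auto
      qed
    qed simp
  qed simp
  interpret finite_measure_subalgebra M F
    by (intro finite_measure_subalgebra.intro finite_measure_subalgebra_axioms.intro subalg)
      (rule finite_measure_axioms)
  have int_f: "integrable M f"
    using Bochner_Integration.integrable_cong[OF refl, of M f "indicator (E1 \<inter> S)"] f_ind evES by (simp add: integrable_real_indicator emeasure_finite[THEN less_top[THEN iffD1]])
  have int_h: "integrable M h"
    using Bochner_Integration.integrable_cong[OF refl, of M h "\<lambda>x. c * indicator S x"] h_ind evS by (simp add: integrable_real_indicator emeasure_finite[THEN less_top[THEN iffD1]])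
  have hF: "h \<in> borel_measurable F"
  proof -
    have "P \<in> measurable F (count_space UNIV)"
      unfolding F_def by (rule measurable_vimage_algebra1) auto
    then show ?thesis unfolding h_def P_def by measurable
  qed
  have charact: "AE \<omega> in M. real_cond_exp M F f \<omega> = h \<omega>"
  proof (rule real_cond_exp_charact[OF _ int_f int_h hF])
    fix A assume "A \<in> sets F"
    then obtain B where AB: "A = P -` B \<inter> space M"
      unfolding F_def by (subst (asm) sets_vimage_algebra2) auto
    show "(\<integral> x \<in> A. f x \<partial>M) = (\<integral> x \<in> A. h x \<partial>M)"
    proof (cases "True \<in> B")
      case True
      have "(\<integral> x \<in> A. f x \<partial>M) = (\<integral> x. indicator (E1 \<inter> S) x \<partial>M)"
        unfolding set_lebesgue_integral_def
        by (rule Bochner_Integration.integral_cong[OF refl]) (auto simp: AB f_def P_def E1_def S_def indicator_def True)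
      also have "\<dots> = prob (E1 \<inter> S)" using evES by simp
      also have "\<dots> = c * prob S" by (rule key)
      also have "\<dots> = (\<integral> x. c * indicator S x \<partial>M)" using evS by simp
      also have "\<dots> = (\<integral> x \<in> A. h x \<partial>M)"
        unfolding set_lebesgue_integral_def
        by (rule Bochner_Integration.integral_cong[OF refl]) (auto simp: AB h_def S_def P_def indicator_def True)
      finally show ?thesis .
    next
      case False
      have "(\<integral> x \<in> A. f x \<partial>M) = (\<integral> x. 0 \<partial>M)"
        unfolding set_lebesgue_integral_def
        by (rule Bochner_Integration.integral_cong[OF refl]) (auto simp: AB f_def P_def indicator_def False)
      also have "\<dots> = (\<integral> x \<in> A. h x \<partial>M)"
        unfolding set_lebesgue_integral_def
        by (rule Bochner_Integration.integral_cong[OF refl]) (auto simp: AB h_def P_def indicator_def False)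
      finally show ?thesis .
    qed
  qed
  show ?thesis
    using charact unfolding Feq
    by (auto simp: F_def P_def f_def h_def c_def)
qed

end
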